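(* \textsc{Maintain-Matching} takes $O(\varepsilon\Delta)$ time per update and maintains a maximal matching $\mathcal{M}_N$ of size at least $\frac{|\overline{E(C)}|}{20\varepsilon\Delta}$, with high probability, throughout a phase.
   Context: $G$ is a fully dynamic graph with maximum degree at most $\Delta$, $0<\varepsilon<1$. During a phase, a vertex set $C$ (an almost-clique) is fixed, and with high probability every vertex of $C$ has at most $5\varepsilon\Delta$ non-neighbors in $C$ throughout the phase. $\overline{E(C)}$ is the set of non-edges (pairs of distinct vertices of $C$ not joined by an edge) and $\overline{E_C(w)}$ the non-edges of $C$ incident to $w$. At the start of the phase, $\mathcal{M}_N$ is a maximal matching in the graph $(C,\overline{E(C)})$, and an array matched$[\cdot]$ records which vertices are matched. \textsc{Maintain-Matching}$(u,v)$ for an update with $u,v\in C$: if $(u,v)$ is an edge insertion (a non-edge deletion), remove $(u,v)$ from $\overline{E(C)},\overline{E_C(u)},\overline{E_C(v)}$; if $(u,v)\in\mathcal{M}_N$, remove it and unmark $u,v$; then for each $w\in\{u,v\}$ that is unmatched, scan $\overline{E_C(w)}$ and, if some non-edge $(w,x)$ has $x$ unmatched, add $(w,x)$ to $\mathcal{M}_N$ and mark $w,x$. If $(u,v)$ is an edge deletion (a non-edge insertion), add $(u,v)$ to $\overline{E(C)},\overline{E_C(u)},\overline{E_C(v)}$, and if both $u,v$ are unmatched add $(u,v)$ to $\mathcal{M}_N$ and mark them. "With high probability" means with probability at least $1-1/\mathrm{poly}(n)$. *)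

theory Defs
  imports Complex_Main
begin

datatype 'a upd = Ins 'a 'a | Del 'a 'a

definition apply_upd :: "'a set set \<Rightarrow> 'a upd \<Rightarrow> 'a set set" where
  "apply_upd E up = (case up of Ins u v \<Rightarrow> insert {u,v} E | Del u v \<Rightarrow> E - {{u,v}})"

definition valid_upd :: "'a set \<Rightarrow> 'a set set \<Rightarrow> 'a upd \<Rightarrow> bool" where
  "valid_upd V E up = (case up of
      Ins u v \<Rightarrow> u \<in> V \<and> v \<in> V \<and> u \<noteq> v \<and> {u,v} \<notin> E
    | Del u v \<Rightarrow> {u,v} \<in> E)"

definition simple_graph :: "'a set \<Rightarrow> 'a set set \<Rightarrow> bool" where
  "simple_graph V E = (E \<subseteq> {{x,y} | x y. x \<in> V \<and> y \<in> V \<and> x \<noteq> y})"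

definition degree :: "'a set set \<Rightarrow> 'a \<Rightarrow> nat" where
  "degree E w = card {x. {w,x} \<in> E}"

definition nonedges :: "'a set \<Rightarrow> 'a set set \<Rightarrow> 'a set set" where
  "nonedges C E = {{x,y} | x y. x \<in> C \<and> y \<in> C \<and> x \<noteq> y \<and> {x,y} \<notin> E}"

definition nonnbrs :: "'a set \<Rightarrow> 'a set set \<Rightarrow> 'a \<Rightarrow> 'a set" where
  "nonnbrs C E w = {x \<in> C. x \<noteq> w \<and> {w,x} \<notin> E}"

definition is_matching :: "'a set set \<Rightarrow> bool" where
  "is_matching M = ((\<forall>e\<in>M. \<exists>x y. e = {x,y} \<and> x \<noteq> y) \<and>
                    (\<forall>e\<in>M. \<forall>e'\<in>M. e \<noteq> e' \<longrightarrow> e \<inter> e' = {}))"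

definition maximal_matching_in :: "'a set set \<Rightarrow> 'a set set \<Rightarrow> bool" where
  "maximal_matching_in F M = (M \<subseteq> F \<and> is_matching M \<and> (\<forall>e\<in>F. \<exists>e'\<in>M. e \<inter> e' \<noteq> {}))"

(* Data structure state:
   nonE  = \overline{E(C)},
   nadj w = \overline{E_C(w)} stored as a list of the other endpoints,
   mat   = M_N,
   mkd   = the array matched[.] *)
record 'a mstate =
  nonE :: "'a set set"
  nadj :: "'a \<Rightarrow> 'a list"
  mat  :: "'a set set"
  mkd  :: "'a \<Rightarrow> bool"

(* Linear scan for the first element satisfying p; the second component is the
   number of list elements inspected (unit cost each). *)
fun scan :: "('a \<Rightarrow> bool) \<Rightarrow> 'a list \<Rightarrow> 'a option \<times> nat" where
  "scan p [] = (None, 0)"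
| "scan p (x # xs) = (if p x then (Some x, 1) else (case scan p xs of (r, c) \<Rightarrow> (r, Suc c)))"

definition try_match :: "'a mstate \<Rightarrow> 'a \<Rightarrow> 'a mstate \<times> nat" where
  "try_match s w =
     (if mkd s w then (s, 1)
      else (case scan (\<lambda>x. \<not> mkd s x) (nadj s w) of
              (None, c) \<Rightarrow> (s, c + 1)
            | (Some x, c) \<Rightarrow> (s\<lparr>mat := insert {w,x} (mat s), mkd := (mkd s)(w := True, x := True)\<rparr>, c + 1)))"

(* Returns the new state and the running time, where every
   O(1) set/array operation costs 1, each inspected list element costs 1, and removing
   an element from a list costs the length of the list.  Updates not inside C do not
   invoke the procedure (state unchanged, cost 0). *)
definition mm_update :: "'a set \<Rightarrow> 'a upd \<Rightarrow> 'a mstate \<Rightarrow> 'a mstate \<times> nat" where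
  "mm_update C up s = (case up of
     Ins u v \<Rightarrow>
       (if u \<in> C \<and> v \<in> C \<and> u \<noteq> v then
          (let s1 = s\<lparr>nonE := nonE s - {{u,v}},
                      nadj := (nadj s)(u := removeAll v (nadj s u), v := removeAll u (nadj s v))\<rparr>;
               c1 = 1 + length (nadj s u) + length (nadj s v);
               s2 = (if {u,v} \<in> mat s1
                     then s1\<lparr>mat := mat s1 - {{u,v}}, mkd := (mkd s1)(u := False, v := False)\<rparr>
                     else s1);
               (s3, c3) = try_match s2 u;
               (s4, c4) = try_match s3 v
           in (s4, c1 + 1 + c3 + c4))
        else (s, 0))
   | Del u v \<Rightarrow>
       (if u \<in> C \<and> v \<in> C \<and> u \<noteq> v then
          (let s1 = s\<lparr>nonE := insert {u,v} (nonE s),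
                      nadj := (nadj s)(u := v # nadj s u, v := u # nadj s v)\<rparr>
           in if \<not> mkd s u \<and> \<not> mkd s v
              then (s1\<lparr>mat := insert {u,v} (mat s1), mkd := (mkd s1)(u := True, v := True)\<rparr>, 1)
              else (s1, 1))
        else (s, 0)))"

definition graph_at :: "'a set set \<Rightarrow> 'a upd list \<Rightarrow> nat \<Rightarrow> 'a set set" where
  "graph_at E0 us i = foldl apply_upd E0 (take i us)"

definition state_at :: "'a set \<Rightarrow> 'a mstate \<Rightarrow> 'a upd list \<Rightarrow> nat \<Rightarrow> 'a mstate" where
  "state_at C s0 us i = foldl (\<lambda>s up. fst (mm_update C up s)) s0 (take i us)"

definition cost_at :: "'a set \<Rightarrow> 'a mstate \<Rightarrow> 'a upd list \<Rightarrow> nat \<Rightarrow> nat" where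
  "cost_at C s0 us i = snd (mm_update C (us ! i) (state_at C s0 us i))"

end

theory Submission
  imports Defs
begin

definition minv :: "'a set \<Rightarrow> 'a set set \<Rightarrow> 'a mstate \<Rightarrow> bool" where
 "minv C E s \<longleftrightarrow> nonE s = nonedges C E \<and> (\<forall>w\<in>C. distinct (nadj s w) \<and> set (nadj s w) = nonnbrs C E w)
   \<and> maximal_matching_in (nonedges C E) (mat s) \<and> (\<forall>w. mkd s w = (w \<in> \<Union>(mat s)))"

lemma scan_some: "scan p xs = (Some x, c) \<Longrightarrow> x \<in> set xs \<and> p x"
  by (induction xs arbitrary: c) (auto split: if_splits prod.splits)
lemma scan_none: "scan p xs = (None, c) \<Longrightarrow> \<forall>x\<in>set xs. \<not> p x"
  by (induction xs arbitrary: c) (auto split: if_splits prod.splits)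
lemma scan_cost: "snd (scan p xs) \<le> length xs"
  by (induction xs) (auto split: prod.splits)

lemma matching_insert:
  assumes m: "is_matching M" and "w \<notin> \<Union>M" "x \<notin> \<Union>M" "w \<noteq> x"
  shows "is_matching (insert {w,x} M)"
proof -
  have d: "\<forall>e\<in>M. e \<inter> {w,x} = {}" using assms(2,3) by blast
  have a: "\<forall>e\<in>M. \<exists>a b. e = {a,b} \<and> a \<noteq> b" "\<forall>e\<in>M. \<forall>e'\<in>M. e \<noteq> e' \<longrightarrow> e \<inter> e' = {}"
    using m unfolding is_matching_def by auto
  have "\<forall>e\<in>insert {w,x} M. \<exists>a b. e = {a,b} \<and> a \<noteq> b"
    using a(1) assms(4) by (metis insert_iff)
  moreover have "\<forall>e\<in>insert {w,x} M. \<forall>e'\<in>insert {w,x} M. e \<noteq> e' \<longrightarrow> e \<inter> e' = {}"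
  proof (intro ballI impI)
    fix e e' assume "e \<in> insert {w,x} M" "e' \<in> insert {w,x} M" "e \<noteq> e'"
    then consider "e = {w,x}" "e' \<in> M" | "e' = {w,x}" "e \<in> M" | "e \<in> M" "e' \<in> M" by auto
    then show "e \<inter> e' = {}"
    proof cases
      case 1 then show ?thesis using d by (simp add: Int_commute)
    next
      case 2 then show ?thesis using d by simp
    next
      case 3 then show ?thesis using a(2) \<open>e \<noteq> e'\<close> by blast
    qed
  qed
  ultimately show ?thesis unfolding is_matching_def by blast
qed

lemma matching_subset: "is_matching M \<Longrightarrow> M' \<subseteq> M \<Longrightarrow> is_matching M'"
  unfolding is_matching_def by (meson subsetD)

lemma matching_remove_union:
  assumes "is_matching M" "{u,v} \<in> M" shows "\<Union>(M - {{u,v}}) = \<Union>M - {u,v}"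
proof -
  have "\<forall>e\<in>M. e \<noteq> {u,v} \<longrightarrow> e \<inter> {u,v} = {}" using assms unfolding is_matching_def by metis
  then show ?thesis using assms(2) by blast
qed

lemma try_match_props:
  assumes "is_matching (mat s)" "mat s \<subseteq> nonedges C E" "\<forall>y. mkd s y = (y \<in> \<Union>(mat s))"
    "\<forall>y\<in>C. set (nadj s y) = nonnbrs C E y" "w \<in> C"
    and tm: "try_match s w = (s', c)"
  shows "is_matching (mat s') \<and> mat s' \<subseteq> nonedges C E \<and> (\<forall>y. mkd s' y = (y \<in> \<Union>(mat s')))
     \<and> nadj s' = nadj s \<and> nonE s' = nonE s \<and> mat s \<subseteq> mat s'
     \<and> (w \<in> \<Union>(mat s') \<or> (\<forall>x\<in>nonnbrs C E w. x \<in> \<Union>(mat s'))) \<and> c \<le> length (nadj s w) + 1"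
  (is "?A \<and> ?B \<and> ?C \<and> ?D \<and> ?E \<and> ?F \<and> ?G \<and> ?H")
proof (cases "mkd s w")
  case True
  then have "s' = s" "c = 1" using tm unfolding try_match_def by simp_all
  moreover have "w \<in> \<Union>(mat s)" using True assms(3) by blast
  ultimately show ?thesis using assms(1-3) by simp
next
  case False
  obtain r c0 where sc: "scan (\<lambda>x. \<not> mkd s x) (nadj s w) = (r, c0)" by (cases "scan (\<lambda>x. \<not> mkd s x) (nadj s w)")
  have c0: "c0 \<le> length (nadj s w)" using scan_cost[of "\<lambda>x. \<not> mkd s x" "nadj s w"] sc by simp
  show ?thesis
  proof (cases r)
    case None
    then have "\<forall>x\<in>set (nadj s w). mkd s x" using scan_none sc by fastforce
    moreover have "s' = s" "c = c0 + 1" using tm False sc None unfolding try_match_def by simp_all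
    ultimately show ?thesis using assms(1-5) c0 by auto
  next
    case (Some x)
    then have x: "x \<in> nonnbrs C E w" "\<not> mkd s x" using scan_some[OF sc[unfolded Some]] assms(4,5) by auto
    have s': "s' = s\<lparr>mat := insert {w,x} (mat s), mkd := (mkd s)(w := True, x := True)\<rparr>" "c = c0 + 1"
      using tm False sc Some unfolding try_match_def by simp_all
    have wx: "w \<noteq> x" "{w,x} \<in> nonedges C E" using x assms(5) by (auto simp: nonnbrs_def nonedges_def)
    have "is_matching (mat s')" unfolding s'(1) using matching_insert[OF assms(1), of w x] False x(2) assms(3) wx by simp
    moreover have "mat s' \<subseteq> nonedges C E" using s'(1) wx assms(2) by simp
    moreover have "\<forall>y. mkd s' y = (y \<in> \<Union>(mat s'))" unfolding s'(1) using assms(3) by simp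
    moreover have "w \<in> \<Union>(mat s')" using s'(1) by simp
    moreover have "c \<le> length (nadj s w) + 1" using s'(2) c0 by simp
    moreover have "nadj s' = nadj s \<and> nonE s' = nonE s \<and> mat s \<subseteq> mat s'" unfolding s'(1) by (simp add: subset_insertI)
    ultimately show ?thesis by blast
  qed
qed

lemma nonedges_ins: "u \<in> C \<Longrightarrow> v \<in> C \<Longrightarrow> u \<noteq> v \<Longrightarrow> nonedges C (insert {u,v} E) = nonedges C E - {{u,v}}"
  unfolding nonedges_def by auto

lemma nonedges_ins_out: "\<not> (u \<in> C \<and> v \<in> C \<and> u \<noteq> v) \<Longrightarrow> nonedges C (insert {u,v} E) = nonedges C E"
  unfolding nonedges_def by (auto simp: doubleton_eq_iff)

lemma nonedges_del: "u \<in> C \<Longrightarrow> v \<in> C \<Longrightarrow> u \<noteq> v \<Longrightarrow> nonedges C (E - {{u,v}}) = insert {u,v} (nonedges C E)"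
  unfolding nonedges_def by auto

lemma nonedges_del_out: "\<not> (u \<in> C \<and> v \<in> C \<and> u \<noteq> v) \<Longrightarrow> nonedges C (E - {{u,v}}) = nonedges C E"
  unfolding nonedges_def by (auto simp: doubleton_eq_iff)

lemma nonnbrs_ins_out: "\<not> (u \<in> C \<and> v \<in> C \<and> u \<noteq> v) \<Longrightarrow> w \<in> C \<Longrightarrow> nonnbrs C (insert {u,v} E) w = nonnbrs C E w"
  unfolding nonnbrs_def by (auto simp: doubleton_eq_iff)

lemma nonnbrs_del_out: "\<not> (u \<in> C \<and> v \<in> C \<and> u \<noteq> v) \<Longrightarrow> w \<in> C \<Longrightarrow> nonnbrs C (E - {{u,v}}) w = nonnbrs C E w"
  unfolding nonnbrs_def by (auto simp: doubleton_eq_iff)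

lemma nonnbrs_ins: "u \<noteq> v \<Longrightarrow>
   nonnbrs C (insert {u,v} E) w = (if w = u then nonnbrs C E w - {v} else if w = v then nonnbrs C E w - {u} else nonnbrs C E w)"
  unfolding nonnbrs_def by (auto simp: doubleton_eq_iff)

lemma nonnbrs_del: "u \<in> C \<Longrightarrow> v \<in> C \<Longrightarrow> u \<noteq> v \<Longrightarrow>
   nonnbrs C (E - {{u,v}}) w = (if w = u then insert v (nonnbrs C E w) else if w = v then insert u (nonnbrs C E w) else nonnbrs C E w)"
  unfolding nonnbrs_def by (auto simp: doubleton_eq_iff)

lemma out_ins: "minv C E s \<Longrightarrow> \<not> (u \<in> C \<and> v \<in> C \<and> u \<noteq> v) \<Longrightarrow> minv C (insert {u,v} E) s"
  unfolding minv_def using nonedges_ins_out[of u C v E] nonnbrs_ins_out[of u C v _ E] by simp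

lemma out_del: "minv C E s \<Longrightarrow> \<not> (u \<in> C \<and> v \<in> C \<and> u \<noteq> v) \<Longrightarrow> minv C (E - {{u,v}}) s"
  unfolding minv_def using nonedges_del_out[of u C v E] nonnbrs_del_out[of u C v _ E] by simp

lemma cover_mem: "z \<in> e \<Longrightarrow> z \<in> \<Union>M \<Longrightarrow> \<exists>e'\<in>M. e \<inter> e' \<noteq> {}"
  by blast

lemma del_step:
  assumes inv: "minv C E s" and uv: "u \<in> C" "v \<in> C" "u \<noteq> v" "{u,v} \<in> E"
  shows "minv C (E - {{u,v}}) (fst (mm_update C (Del u v) s)) \<and> snd (mm_update C (Del u v) s) = 1"
proof -
  define s1 where "s1 = s\<lparr>nonE := insert {u,v} (nonE s), nadj := (nadj s)(u := v # nadj s u, v := u # nadj s v)\<rparr>"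
  define s' where "s' = (if \<not> mkd s u \<and> \<not> mkd s v
              then s1\<lparr>mat := insert {u,v} (mat s1), mkd := (mkd s1)(u := True, v := True)\<rparr> else s1)"
  have mm: "mm_update C (Del u v) s = (s', 1)"
    using uv unfolding mm_update_def s'_def s1_def Let_def by simp
  have I: "nonE s = nonedges C E" "\<forall>w\<in>C. distinct (nadj s w) \<and> set (nadj s w) = nonnbrs C E w"
    "maximal_matching_in (nonedges C E) (mat s)" "\<forall>w. mkd s w = (w \<in> \<Union>(mat s))"
    using inv unfolding minv_def by auto
  have nv: "v \<notin> nonnbrs C E u" "u \<notin> nonnbrs C E v" using uv(4) unfolding nonnbrs_def by (auto simp: insert_commute)
  have N: "nonedges C (E - {{u,v}}) = insert {u,v} (nonedges C E)" using nonedges_del uv by metis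
  have nonE': "nonE s' = nonedges C (E - {{u,v}})" using N I(1) unfolding s'_def s1_def by simp
  have nadj': "\<forall>w\<in>C. distinct (nadj s' w) \<and> set (nadj s' w) = nonnbrs C (E - {{u,v}}) w"
  proof
    fix w assume w: "w \<in> C"
    have "nadj s' w = (if w = u then v # nadj s u else if w = v then u # nadj s v else nadj s w)"
      unfolding s'_def s1_def using uv(3) by simp
    then show "distinct (nadj s' w) \<and> set (nadj s' w) = nonnbrs C (E - {{u,v}}) w"
      using I(2) w uv nv nonnbrs_del[OF uv(1-3), of E w] by auto
  qed
  have M: "mat s \<subseteq> nonedges C E" "is_matching (mat s)" "\<forall>e\<in>nonedges C E. \<exists>e'\<in>mat s. e \<inter> e' \<noteq> {}"
    using I(3) unfolding maximal_matching_in_def by auto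
  have rest: "maximal_matching_in (nonedges C (E - {{u,v}})) (mat s') \<and> (\<forall>w. mkd s' w = (w \<in> \<Union>(mat s')))"
  proof (cases "\<not> mkd s u \<and> \<not> mkd s v")
    case True
    then have ms: "mat s' = insert {u,v} (mat s)" "mkd s' = (mkd s)(u := True, v := True)"
      unfolding s'_def s1_def by simp_all
    have "is_matching (mat s')" using ms matching_insert[OF M(2), of u v] True I(4) uv(3) by simp
    moreover have "mat s' \<subseteq> nonedges C (E - {{u,v}})" using ms N M(1) by auto
    moreover have "\<forall>e\<in>nonedges C (E - {{u,v}}). \<exists>e'\<in>mat s'. e \<inter> e' \<noteq> {}"
      using N M(3) ms by auto
    moreover have "\<forall>w. mkd s' w = (w \<in> \<Union>(mat s'))" using ms I(4) by simp
    ultimately show ?thesis unfolding maximal_matching_in_def by blast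
  next
    case False
    then have ms: "mat s' = mat s" "mkd s' = mkd s"
      unfolding s'_def s1_def by auto
    have "\<exists>e'\<in>mat s. {u,v} \<inter> e' \<noteq> {}" using False I(4) cover_mem[of u "{u,v}"] cover_mem[of v "{u,v}"] by auto
    then have "\<forall>e\<in>nonedges C (E - {{u,v}}). \<exists>e'\<in>mat s'. e \<inter> e' \<noteq> {}"
      using N M(3) ms by auto
    then show ?thesis using ms M N I(4) unfolding maximal_matching_in_def by auto
  qed
  show ?thesis using mm nonE' nadj' rest unfolding minv_def by simp
qed

lemma ins_step:
  assumes inv: "minv C E s" and uv: "u \<in> C" "v \<in> C" "u \<noteq> v" "{u,v} \<notin> E"
  shows "minv C (insert {u,v} E) (fst (mm_update C (Ins u v) s)) \<and>
         snd (mm_update C (Ins u v) s) \<le> 2 * length (nadj s u) + 2 * length (nadj s v) + 4"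
proof -
  define E' where "E' = insert {u,v} E"
  define s1 where "s1 = s\<lparr>nonE := nonE s - {{u,v}},
                      nadj := (nadj s)(u := removeAll v (nadj s u), v := removeAll u (nadj s v))\<rparr>"
  define s2 where "s2 = (if {u,v} \<in> mat s1
                     then s1\<lparr>mat := mat s1 - {{u,v}}, mkd := (mkd s1)(u := False, v := False)\<rparr>
                     else s1)"
  obtain s3 c3 where t3: "try_match s2 u = (s3,c3)" by (cases "try_match s2 u")
  obtain s4 c4 where t4: "try_match s3 v = (s4,c4)" by (cases "try_match s3 v")
  have mm: "mm_update C (Ins u v) s = (s4, 1 + length (nadj s u) + length (nadj s v) + 1 + c3 + c4)"
  proof -
    have "mm_update C (Ins u v) s = (case try_match s2 u of (s3,c3) \<Rightarrow> (case try_match s3 v of (s4,c4) \<Rightarrow>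
        (s4, 1 + length (nadj s u) + length (nadj s v) + 1 + c3 + c4)))"
      using uv by (simp add: mm_update_def Let_def s1_def s2_def)
    then show ?thesis using t3 t4 by simp
  qed
  have I: "nonE s = nonedges C E" "\<forall>w\<in>C. distinct (nadj s w) \<and> set (nadj s w) = nonnbrs C E w"
    "maximal_matching_in (nonedges C E) (mat s)" "\<forall>w. mkd s w = (w \<in> \<Union>(mat s))"
    using inv unfolding minv_def by auto
  have M: "mat s \<subseteq> nonedges C E" "is_matching (mat s)" "\<forall>e\<in>nonedges C E. \<exists>e'\<in>mat s. e \<inter> e' \<noteq> {}"
    using I(3) unfolding maximal_matching_in_def by auto
  have N: "nonedges C E' = nonedges C E - {{u,v}}" unfolding E'_def using nonedges_ins uv by metis
  have s2m: "mat s2 = mat s - {{u,v}}" "nadj s2 = nadj s1" "nonE s2 = nonE s - {{u,v}}"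
    unfolding s2_def s1_def by auto
  have s2k: "\<forall>y. mkd s2 y = (y \<in> \<Union>(mat s2))"
  proof (cases "{u,v} \<in> mat s")
    case True
    then have "mkd s2 = (mkd s)(u := False, v := False)" unfolding s2_def s1_def by simp
    then show ?thesis using s2m(1) matching_remove_union[OF M(2) True] I(4) by simp
  next
    case False
    then have "mkd s2 = mkd s" unfolding s2_def s1_def by simp
    then show ?thesis using s2m(1) False I(4) by simp
  qed
  have s2match: "is_matching (mat s2)" using s2m(1) matching_subset[OF M(2)] by blast
  have s2sub: "mat s2 \<subseteq> nonedges C E'" using s2m(1) M(1) N by blast
  have s2nadj: "\<forall>y\<in>C. distinct (nadj s2 y) \<and> set (nadj s2 y) = nonnbrs C E' y"
  proof
    fix w assume w: "w \<in> C"
    have "nadj s2 w = (if w = u then removeAll v (nadj s u) else if w = v then removeAll u (nadj s v) else nadj s w)"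
      unfolding s2m(2) s1_def using uv(3) by simp
    then show "distinct (nadj s2 w) \<and> set (nadj s2 w) = nonnbrs C E' w"
      using I(2) w uv unfolding E'_def nonnbrs_ins[OF uv(3)] by (auto simp: distinct_removeAll)
  qed
  have s2set: "\<forall>y\<in>C. set (nadj s2 y) = nonnbrs C E' y" using s2nadj by blast
  note P3 = try_match_props[OF s2match s2sub s2k s2set uv(1) t3]
  obtain P3a: "is_matching (mat s3)" and P3b: "mat s3 \<subseteq> nonedges C E'" and P3c: "\<forall>y. mkd s3 y = (y \<in> \<Union>(mat s3))"
    and P3d: "nadj s3 = nadj s2" and P3e: "nonE s3 = nonE s2" and P3f: "mat s2 \<subseteq> mat s3"
    and P3g: "u \<in> \<Union>(mat s3) \<or> (\<forall>x\<in>nonnbrs C E' u. x \<in> \<Union>(mat s3))" and P3h: "c3 \<le> length (nadj s2 u) + 1"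
    using P3 by (elim conjE) assumption
  have s3set: "\<forall>y\<in>C. set (nadj s3 y) = nonnbrs C E' y" using s2set P3d by simp
  note P4 = try_match_props[OF P3a P3b P3c s3set uv(2) t4]
  obtain P4a: "is_matching (mat s4)" and P4b: "mat s4 \<subseteq> nonedges C E'" and P4c: "\<forall>y. mkd s4 y = (y \<in> \<Union>(mat s4))"
    and P4d: "nadj s4 = nadj s3" and P4e: "nonE s4 = nonE s3" and P4f: "mat s3 \<subseteq> mat s4"
    and P4g: "v \<in> \<Union>(mat s4) \<or> (\<forall>x\<in>nonnbrs C E' v. x \<in> \<Union>(mat s4))" and P4h: "c4 \<le> length (nadj s3 v) + 1"
    using P4 by (elim conjE) assumption
  have cover: "\<forall>e\<in>nonedges C E'. \<exists>e'\<in>mat s4. e \<inter> e' \<noteq> {}"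
  proof
    fix e assume e: "e \<in> nonedges C E'"
    show "\<exists>e'\<in>mat s4. e \<inter> e' \<noteq> {}"
    proof (cases "\<exists>e'\<in>mat s2. e \<inter> e' \<noteq> {}")
      case True
      then show ?thesis using P3f P4f by blast
    next
      case False
      have "e \<in> nonedges C E" using e N by blast
      then obtain e' where "e' \<in> mat s" "e \<inter> e' \<noteq> {}" using M(3) by blast
      then have "e' = {u,v}" using False s2m(1) by blast
      then have euv: "u \<in> e \<or> v \<in> e" using \<open>e \<inter> e' \<noteq> {}\<close> by blast
      obtain x y where xy: "e = {x,y}" "x \<in> C" "y \<in> C" "x \<noteq> y" "{x,y} \<notin> E'"
        using e unfolding nonedges_def by blast
      have nb: "y \<in> nonnbrs C E' x" "x \<in> nonnbrs C E' y" using xy unfolding nonnbrs_def by (auto simp: insert_commute)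
      have sub: "\<Union>(mat s3) \<subseteq> \<Union>(mat s4)" using P4f by blast
      have uc: "u \<in> \<Union>(mat s4) \<or> (\<forall>z\<in>nonnbrs C E' u. z \<in> \<Union>(mat s4))"
        using P3g sub by blast
      have "\<exists>z\<in>e. z \<in> \<Union>(mat s4)"
      proof (cases "u \<in> e")
        case True
        then have "x = u \<or> y = u" using xy(1) by blast
        then show ?thesis using uc nb xy(1) by blast
      next
        case False
        then have "v \<in> e" using euv by blast
        then have "x = v \<or> y = v" using xy(1) by blast
        then show ?thesis using P4g nb xy(1) by blast
      qed
      then show ?thesis by blast
    qed
  qed
  have nonE4: "nonE s4 = nonedges C E'" using P4e P3e s2m(3) I(1) N by simp
  have nadj4: "\<forall>w\<in>C. distinct (nadj s4 w) \<and> set (nadj s4 w) = nonnbrs C E' w" using P4d P3d s2nadj by simp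
  have mm4: "maximal_matching_in (nonedges C E') (mat s4)" unfolding maximal_matching_in_def using P4a P4b cover by blast
  have inv4: "minv C E' s4" unfolding minv_def using nonE4 nadj4 mm4 P4c by blast
  have l2: "length (nadj s2 u) \<le> length (nadj s u)" "length (nadj s2 v) \<le> length (nadj s v)"
    unfolding s2m(2) s1_def using uv(3) by (simp_all add: length_removeAll_less_eq)
  have "c3 + c4 \<le> length (nadj s u) + length (nadj s v) + 2" using P3h P4h P3d l2 by simp
  then show ?thesis using mm inv4 unfolding E'_def by simp
qed

lemma size_bound:
  assumes fin: "finite C" and mm: "maximal_matching_in (nonedges C E) M"
    and B: "\<forall>w\<in>C. real (card (nonnbrs C E w)) \<le> B"
  shows "real (card (nonedges C E)) \<le> 2 * B * real (card M)"
proof -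
  have M: "M \<subseteq> nonedges C E" "is_matching M" "\<forall>e\<in>nonedges C E. \<exists>e'\<in>M. e \<inter> e' \<noteq> {}"
    using mm unfolding maximal_matching_in_def by auto
  have NP: "nonedges C E \<subseteq> Pow C" unfolding nonedges_def by auto
  have finN: "finite (nonedges C E)" using NP fin finite_Pow_iff finite_subset by metis
  have finM: "finite M" using M(1) finN finite_subset by blast
  define U where "U = \<Union>M"
  have UC: "U \<subseteq> C" using M(1) NP unfolding U_def by blast
  have finU: "finite U" using UC fin finite_subset by blast
  have c2: "\<forall>e\<in>M. card e = 2" using M(2) unfolding is_matching_def by auto
  have cardU: "card U \<le> 2 * card M"
  proof -
    have "card U \<le> sum card M" unfolding U_def by (rule card_Union_le_sum_card)
    also have "sum card M = 2 * card M" using c2 by simp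
    finally show ?thesis .
  qed
  have finnb: "\<And>z. finite (nonnbrs C E z)" using fin unfolding nonnbrs_def by simp
  have sub: "nonedges C E \<subseteq> (\<Union>z\<in>U. (\<lambda>x. {z,x}) ` nonnbrs C E z)"
  proof
    fix e assume e: "e \<in> nonedges C E"
    obtain x y where xy: "e = {x,y}" "x \<in> C" "y \<in> C" "x \<noteq> y" "{x,y} \<notin> E"
      using e unfolding nonedges_def by blast
    have nb: "y \<in> nonnbrs C E x" "x \<in> nonnbrs C E y" using xy unfolding nonnbrs_def by (auto simp: insert_commute)
    obtain e' where "e' \<in> M" "e \<inter> e' \<noteq> {}" using M(3) e by blast
    then have "x \<in> U \<or> y \<in> U" unfolding U_def using xy(1) by blast
    then show "e \<in> (\<Union>z\<in>U. (\<lambda>x. {z,x}) ` nonnbrs C E z)"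
    proof
      assume "x \<in> U" then show ?thesis using nb xy(1) by blast
    next
      assume "y \<in> U" then show ?thesis using nb xy(1) by (auto simp: insert_commute)
    qed
  qed
  have "card (nonedges C E) \<le> card (\<Union>z\<in>U. (\<lambda>x. {z,x}) ` nonnbrs C E z)"
    by (rule card_mono) (use finU finnb sub in auto)
  also have "\<dots> \<le> (\<Sum>z\<in>U. card ((\<lambda>x. {z,x}) ` nonnbrs C E z))" by (rule card_UN_le[OF finU])
  also have "\<dots> \<le> (\<Sum>z\<in>U. card (nonnbrs C E z))" by (rule sum_mono) (rule card_image_le[OF finnb])
  finally have le1: "real (card (nonedges C E)) \<le> (\<Sum>z\<in>U. real (card (nonnbrs C E z)))"
    by (metis of_nat_le_iff of_nat_sum)
  also have "\<dots> \<le> (\<Sum>z\<in>U. B)" by (rule sum_mono) (use B UC in auto)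
  also have "\<dots> = real (card U) * B" by simp
  finally have le2: "real (card (nonedges C E)) \<le> real (card U) * B" .
  show ?thesis
  proof (cases "U = {}")
    case True
    then show ?thesis using le2 M(3) M(1) sub by auto
  next
    case False
    then obtain z where "z \<in> U" by blast
    then have "B \<ge> 0" using B UC by force
    have "real (card U) * B \<le> real (2 * card M) * B"
      using cardU \<open>B \<ge> 0\<close> by (intro mult_right_mono) simp_all
    then show ?thesis using le2 by (simp add: mult_ac)
  qed
qed

lemma step_inv:
  assumes "minv C E s" "valid_upd V E up"
  shows "minv C (apply_upd E up) (fst (mm_update C up s))"
proof (cases up)
  case (Ins u v)
  show ?thesis
  proof (cases "u \<in> C \<and> v \<in> C \<and> u \<noteq> v")
    case True
    then show ?thesis using ins_step[OF assms(1), of u v] assms(2) Ins by (simp add: valid_upd_def apply_upd_def)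
  next
    case False
    have "mm_update C up s = (s, 0)" unfolding Ins mm_update_def upd.case if_not_P[OF False] by simp
    then show ?thesis using out_ins[OF assms(1) False] Ins by (simp add: apply_upd_def)
  qed
next
  case (Del u v)
  show ?thesis
  proof (cases "u \<in> C \<and> v \<in> C \<and> u \<noteq> v")
    case True
    then show ?thesis using del_step[OF assms(1), of u v] assms(2) Del by (simp add: valid_upd_def apply_upd_def)
  next
    case False
    have "mm_update C up s = (s, 0)" unfolding Del mm_update_def upd.case if_not_P[OF False] by simp
    then show ?thesis using out_del[OF assms(1) False] Del by (simp add: apply_upd_def)
  qed
qed

lemma step_cost:
  assumes "minv C E s" "valid_upd V E up" "\<forall>w\<in>C. real (card (nonnbrs C E w)) \<le> L" "L \<ge> 0"
  shows "real (snd (mm_update C up s)) \<le> 4 + 4 * L"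
proof (cases up)
  case (Ins u v)
  show ?thesis
  proof (cases "u \<in> C \<and> v \<in> C \<and> u \<noteq> v")
    case True
    have c: "snd (mm_update C up s) \<le> 2 * length (nadj s u) + 2 * length (nadj s v) + 4"
      using ins_step[OF assms(1), of u v] assms(2) Ins True by (simp add: valid_upd_def)
    have "length (nadj s w) = card (nonnbrs C E w)" if "w \<in> C" for w
      using assms(1) that distinct_card unfolding minv_def by metis
    then have "real (length (nadj s u)) \<le> L" "real (length (nadj s v)) \<le> L" using assms(3) True by auto
    moreover have "real (snd (mm_update C up s)) \<le> 2 * real (length (nadj s u)) + 2 * real (length (nadj s v)) + 4"
      using c by (metis (mono_tags, lifting) of_nat_add of_nat_le_iff of_nat_mult of_nat_numeral)
    ultimately show ?thesis by linarith
  next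
    case False
    have "mm_update C up s = (s, 0)" unfolding Ins mm_update_def upd.case if_not_P[OF False] by simp
    then show ?thesis using assms(4) by simp
  qed
next
  case (Del u v)
  have "snd (mm_update C up s) \<le> 1" using Del by (simp add: mm_update_def Let_def)
  then show ?thesis using assms(4) by simp
qed

lemma graph_at_Suc: "i < length us \<Longrightarrow> graph_at E0 us (Suc i) = apply_upd (graph_at E0 us i) (us ! i)"
  unfolding graph_at_def by (simp add: take_Suc_conv_app_nth)

lemma state_at_Suc: "i < length us \<Longrightarrow> state_at C s0 us (Suc i) = fst (mm_update C (us ! i) (state_at C s0 us i))"
  unfolding state_at_def by (simp add: take_Suc_conv_app_nth)

theorem lemma12:
  "\<exists>K::real. \<forall>(V::'a set) C E0 (s0::'a mstate) us (\<epsilon>::real) (\<Delta>::nat).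
     finite V \<and> C \<subseteq> V \<and> 0 < \<epsilon> \<and> \<epsilon> < 1 \<and>
     simple_graph V E0 \<and>
     (\<forall>i<length us. valid_upd V (graph_at E0 us i) (us ! i)) \<and>
     (\<forall>i\<le>length us. \<forall>w\<in>V. degree (graph_at E0 us i) w \<le> \<Delta>) \<and>
     (\<forall>i\<le>length us. \<forall>w\<in>C. real (card (nonnbrs C (graph_at E0 us i) w)) \<le> 5 * \<epsilon> * \<Delta>) \<and>
     nonE s0 = nonedges C E0 \<and>
     (\<forall>w\<in>C. distinct (nadj s0 w) \<and> set (nadj s0 w) = nonnbrs C E0 w) \<and>
     maximal_matching_in (nonedges C E0) (mat s0) \<and>
     (\<forall>w. mkd s0 w \<longleftrightarrow> w \<in> \<Union>(mat s0))
     \<longrightarrow>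
     (\<forall>i<length us. real (cost_at C s0 us i) \<le> K * (1 + \<epsilon> * \<Delta>)) \<and>
     (\<forall>i\<le>length us.
        maximal_matching_in (nonedges C (graph_at E0 us i)) (mat (state_at C s0 us i)) \<and>
        real (card (mat (state_at C s0 us i)))
          \<ge> real (card (nonedges C (graph_at E0 us i))) / (20 * \<epsilon> * \<Delta>))"
proof (intro exI[of _ 20] allI impI)
  fix V :: "'a set" and C E0 and s0 :: "'a mstate" and us and \<epsilon> :: real and \<Delta> :: nat
  assume H: "finite V \<and> C \<subseteq> V \<and> 0 < \<epsilon> \<and> \<epsilon> < 1 \<and>
     simple_graph V E0 \<and>
     (\<forall>i<length us. valid_upd V (graph_at E0 us i) (us ! i)) \<and>
     (\<forall>i\<le>length us. \<forall>w\<in>V. degree (graph_at E0 us i) w \<le> \<Delta>) \<and>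
     (\<forall>i\<le>length us. \<forall>w\<in>C. real (card (nonnbrs C (graph_at E0 us i) w)) \<le> 5 * \<epsilon> * \<Delta>) \<and>
     nonE s0 = nonedges C E0 \<and>
     (\<forall>w\<in>C. distinct (nadj s0 w) \<and> set (nadj s0 w) = nonnbrs C E0 w) \<and>
     maximal_matching_in (nonedges C E0) (mat s0) \<and>
     (\<forall>w. mkd s0 w \<longleftrightarrow> w \<in> \<Union>(mat s0))"
  have finC: "finite C" using H finite_subset by blast
  have ep: "\<epsilon> > 0" using H by blast
  have valid: "\<forall>i<length us. valid_upd V (graph_at E0 us i) (us ! i)" using H by blast
  have nb: "\<forall>i\<le>length us. \<forall>w\<in>C. real (card (nonnbrs C (graph_at E0 us i) w)) \<le> 5 * \<epsilon> * \<Delta>" using H by blast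
  have inv0: "minv C E0 s0" unfolding minv_def using H by blast
  have invs: "i \<le> length us \<Longrightarrow> minv C (graph_at E0 us i) (state_at C s0 us i)" for i
  proof (induction i)
    case 0
    then show ?case using inv0 by (simp add: graph_at_def state_at_def)
  next
    case (Suc i)
    then have il: "i < length us" by simp
    have "minv C (graph_at E0 us i) (state_at C s0 us i)" using Suc il by simp
    then have "minv C (apply_upd (graph_at E0 us i) (us ! i)) (fst (mm_update C (us ! i) (state_at C s0 us i)))"
      using step_inv valid il by blast
    then show ?case using graph_at_Suc[OF il] state_at_Suc[OF il] by simp
  qed
  have L0: "5 * \<epsilon> * real \<Delta> \<ge> 0" using ep by simp
  show "(\<forall>i<length us. real (cost_at C s0 us i) \<le> 20 * (1 + \<epsilon> * \<Delta>)) \<and>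
     (\<forall>i\<le>length us.
        maximal_matching_in (nonedges C (graph_at E0 us i)) (mat (state_at C s0 us i)) \<and>
        real (card (mat (state_at C s0 us i)))
          \<ge> real (card (nonedges C (graph_at E0 us i))) / (20 * \<epsilon> * \<Delta>))"
  proof (intro conjI allI impI)
    fix i assume i: "i < length us"
    have "real (cost_at C s0 us i) \<le> 4 + 4 * (5 * \<epsilon> * real \<Delta>)"
      unfolding cost_at_def
      using step_cost[OF invs valid[rule_format, OF i] _ L0] nb i by simp
    then show "real (cost_at C s0 us i) \<le> 20 * (1 + \<epsilon> * \<Delta>)" by simp
  next
    fix i assume i: "i \<le> length us"
    show mmi: "maximal_matching_in (nonedges C (graph_at E0 us i)) (mat (state_at C s0 us i))"
      using invs[OF i] unfolding minv_def by blast
    have le: "real (card (nonedges C (graph_at E0 us i))) \<le> 2 * (5 * \<epsilon> * real \<Delta>) * real (card (mat (state_at C s0 us i)))"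
      using size_bound[OF finC mmi, of "5 * \<epsilon> * real \<Delta>"] nb i by simp
    show "real (card (mat (state_at C s0 us i))) \<ge> real (card (nonedges C (graph_at E0 us i))) / (20 * \<epsilon> * \<Delta>)"
    proof (cases "\<Delta> = 0")
      case True
      then show ?thesis by simp
    next
      case False
      then have pos: "20 * \<epsilon> * real \<Delta> > 0" using ep by simp
      have "2 * (5 * \<epsilon> * real \<Delta>) * real (card (mat (state_at C s0 us i))) \<le> real (card (mat (state_at C s0 us i))) * (20 * \<epsilon> * real \<Delta>)"
        using ep by (simp add: mult_ac)
      then have "real (card (nonedges C (graph_at E0 us i))) \<le> real (card (mat (state_at C s0 us i))) * (20 * \<epsilon> * real \<Delta>)"
        using le by linarith
      then show ?thesis by (simp add: pos_divide_le_eq[OF pos])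
    qed
  qed
qed

end
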